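(* Fix a prime $p$. Let $E/\mathbb{Q}$ be an elliptic curve with a fixed Weierstrass model (integral coefficients) and let $P\in E(\mathbb{Q})$, $P\neq O$. Write $P=(a/d^2,b/d^3)$ and, for $n\ge1$, $u_n=\frac{d^{n^2}f_n(P)}{d_n}$, where $f_n$ is the $n$-th division polynomial and $d_n=d(nP)$. Then $$P\in E^0(\mathbb{Q}_p)\iff u_2\in\mathbb{Z}_p^\times.$$ In particular, $C_E(P)=\min\{n: |u_2(nP)|=1\}$.
   Context: A point $R\ne O$ of $E(\mathbb{Q})$ is written uniquely as $R=(a/d^2,b/d^3)$ with $a,b,d\in\mathbb{Z}$, $d>0$, $\gcd(a,d)=\gcd(b,d)=1$, and $d(R)=d$. $E^0(\mathbb{Q}_p)$ is the set of points of $E(\mathbb{Q}_p)$ with non-singular reduction mod $p$; $E^0(\mathbb{Q})$ is the set of points of $E(\mathbb{Q})$ with non-singular reduction at every prime; $C_E(P)=\min\{n\ge1: nP\in E^0(\mathbb{Q})\}$. The division polynomial $f_n$ is the one relative to the invariant differential, with $f_2=2y+a_1x+a_3$; $u_2(nP)$ denotes the quantity $u_2$ computed for the point $nP$, and $|\cdot|$ is the ordinary absolute value on $\mathbb{Q}$. *)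

theory Defs
  imports Complex_Main "HOL-Computational_Algebra.Primes"
begin

text \<open>A Weierstrass model with integral coefficients
  y^2 + a1 x y + a3 y = x^3 + a2 x^2 + a4 x + a6.\<close>
record wcurve =
  wa1 :: int
  wa2 :: int
  wa3 :: int
  wa4 :: int
  wa6 :: int

definition disc :: "wcurve \<Rightarrow> int" where
  "disc E = (let a1 = wa1 E; a2 = wa2 E; a3 = wa3 E; a4 = wa4 E; a6 = wa6 E;
      b2 = a1^2 + 4*a2; b4 = 2*a4 + a1*a3; b6 = a3^2 + 4*a6;
      b8 = a1^2*a6 + 4*a2*a6 - a1*a3*a4 + a2*a3^2 - a4^2
    in (- (b2^2*b8)) - 8*b4^3 - 27*b6^2 + 9*b2*b4*b6)"

definition elliptic :: "wcurve \<Rightarrow> bool" where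
  "elliptic E \<longleftrightarrow> disc E \<noteq> 0"

text \<open>Rational points: None is the point at infinity O.\<close>
type_synonym qpoint = "(rat \<times> rat) option"

definition on_curve :: "wcurve \<Rightarrow> qpoint \<Rightarrow> bool" where
  "on_curve E P = (case P of None \<Rightarrow> True | Some (x, y) \<Rightarrow>
     y^2 + of_int (wa1 E)*x*y + of_int (wa3 E)*y
       = x^3 + of_int (wa2 E)*x^2 + of_int (wa4 E)*x + of_int (wa6 E))"

definition padd :: "wcurve \<Rightarrow> qpoint \<Rightarrow> qpoint \<Rightarrow> qpoint" where
  "padd E P Q = (case P of None \<Rightarrow> Q | Some (x1, y1) \<Rightarrow>
     (case Q of None \<Rightarrow> P | Some (x2, y2) \<Rightarrow>
       (let a1 = of_int (wa1 E); a2 = of_int (wa2 E); a3 = of_int (wa3 E);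
            a4 = of_int (wa4 E) in
        if x1 = x2 \<and> y1 + y2 + a1*x2 + a3 = 0 then None
        else
          let l = (if x1 = x2 then (3*x1^2 + 2*a2*x1 + a4 - a1*y1) / (2*y1 + a1*x1 + a3)
                   else (y2 - y1) / (x2 - x1));
              nu = y1 - l*x1;
              x3 = l^2 + a1*l - a2 - x1 - x2;
              y3 = - (l + a1)*x3 - nu - a3
          in Some (x3, y3))))"

fun pmult :: "wcurve \<Rightarrow> nat \<Rightarrow> qpoint \<Rightarrow> qpoint" where
  "pmult E 0 P = None"
| "pmult E (Suc n) P = padd E P (pmult E n P)"

definition infinite_order :: "wcurve \<Rightarrow> qpoint \<Rightarrow> bool" where
  "infinite_order E P \<longleftrightarrow> (\<forall>n::nat. n \<ge> 1 \<longrightarrow> pmult E n P \<noteq> None)"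

definition dnum :: "qpoint \<Rightarrow> int" where
  "dnum R = (THE d. \<exists>a b. d > 0 \<and> gcd a d = 1 \<and> gcd b d = 1 \<and>
                     R = Some (of_int a / of_int d^2, of_int b / of_int d^3))"

definition f2 :: "wcurve \<Rightarrow> qpoint \<Rightarrow> rat" where
  "f2 E R = (case R of None \<Rightarrow> 0 | Some (x, y) \<Rightarrow>
     2*y + of_int (wa1 E)*x + of_int (wa3 E))"

definition u2 :: "wcurve \<Rightarrow> qpoint \<Rightarrow> rat" where
  "u2 E R = of_int (dnum R) ^ 4 * f2 E R / of_int (dnum (pmult E 2 R))"

definition in_pmax :: "int \<Rightarrow> rat \<Rightarrow> bool" where
  "in_pmax p v \<longleftrightarrow> p dvd fst (quotient_of v) \<and> \<not> p dvd snd (quotient_of v)"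

definition padic_unit :: "int \<Rightarrow> rat \<Rightarrow> bool" where
  "padic_unit p v \<longleftrightarrow> \<not> p dvd fst (quotient_of v) \<and> \<not> p dvd snd (quotient_of v)"

text \<open>R \<in> E^0(Q_p) for a rational point R: the reduction mod p of R on the
  fixed model is a non-singular point.  If p | d(R), R reduces to O (non-singular).
  Otherwise R is p-integral, and its reduction is singular iff both partial
  derivatives of the Weierstrass equation vanish mod p.\<close>
definition nonsing_red :: "wcurve \<Rightarrow> int \<Rightarrow> qpoint \<Rightarrow> bool" where
  "nonsing_red E p R = (case R of None \<Rightarrow> True | Some (x, y) \<Rightarrow>
     p dvd dnum R \<or>
     \<not> (in_pmax p (2*y + of_int (wa1 E)*x + of_int (wa3 E)) \<and>
        in_pmax p (of_int (wa1 E)*y - 3*x^2 - 2*of_int (wa2 E)*x - of_int (wa4 E))))"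

definition in_E0 :: "wcurve \<Rightarrow> qpoint \<Rightarrow> bool" where
  "in_E0 E R \<longleftrightarrow> (\<forall>q::int. prime q \<longrightarrow> nonsing_red E q R)"

definition CE :: "wcurve \<Rightarrow> qpoint \<Rightarrow> nat" where
  "CE E P = (LEAST n. n \<ge> 1 \<and> in_E0 E (pmult E n P))"

end

theory Submission
  imports Defs
begin

lemma sing1:
  fixes x y a1 a2 a3 a4 a6 :: rat
  assumes c: "y^2 + a1*x*y + a3*y = x^3 + a2*x^2 + a4*x + a6"
  and f: "2*y + a1*x + a3 = 0" and n: "3*x^2 + 2*a2*x + a4 - a1*y = 0"
  shows "(let b2 = a1^2 + 4*a2; b4 = 2*a4 + a1*a3; b6 = a3^2 + 4*a6;
      b8 = a1^2*a6 + 4*a2*a6 - a1*a3*a4 + a2*a3^2 - a4^2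
    in (- (b2^2*b8)) - 8*b4^3 - 27*b6^2 + 9*b2*b4*b6) = 0"
  using c f n unfolding Let_def by algebra
lemma chord_aux:
  fixes x1 x2 x3 l nu a1 a2 a3 a4 a6 :: rat
  assumes "x1 \<noteq> x2"
  and g1: "(l*x1+nu)^2 + a1*x1*(l*x1+nu) + a3*(l*x1+nu) = x1^3 + a2*x1^2 + a4*x1 + a6"
  and g2: "(l*x2+nu)^2 + a1*x2*(l*x2+nu) + a3*(l*x2+nu) = x2^3 + a2*x2^2 + a4*x2 + a6"
  and x3: "x3 = l^2 + a1*l - a2 - x1 - x2"
  shows "(l*x3+nu)^2 + a1*x3*(l*x3+nu) + a3*(l*x3+nu) = x3^3 + a2*x3^2 + a4*x3 + a6"
    "l*(2*(l*x1+nu) + a1*x1 + a3) - (3*x1^2 + 2*a2*x1 + a4 - a1*(l*x1+nu)) = - (x1-x2)*(x1-x3)"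
proof -
  define c1 where "c1 = 2*l*nu + a1*nu + a3*l - a4 + (x1*x2+x1*x3+x2*x3)"
  define c0 where "c0 = nu^2 + a3*nu - a6 - x1*x2*x3"
  have h: "(l*X+nu)^2 + a1*X*(l*X+nu) + a3*(l*X+nu) - (X^3 + a2*X^2 + a4*X + a6)
     + (X-x1)*(X-x2)*(X-x3) = c1*X + c0" for X
    unfolding c1_def c0_def x3 by algebra
  have e1: "c1*x1 + c0 = 0" using h[of x1] g1 by (simp add: algebra_simps)
  have e2: "c1*x2 + c0 = 0" using h[of x2] g2 by (simp add: algebra_simps)
  have "c1*(x1-x2) = (c1*x1+c0) - (c1*x2+c0)" by (simp add: algebra_simps)
  hence "c1*(x1-x2) = 0" using e1 e2 by simp
  hence c1: "c1 = 0" using assms(1) by simp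
  hence c0: "c0 = 0" using e1 by simp
  show "(l*x3+nu)^2 + a1*x3*(l*x3+nu) + a3*(l*x3+nu) = x3^3 + a2*x3^2 + a4*x3 + a6"
    using h[of x3] c1 c0 by (simp add: algebra_simps)
  have "l*(2*(l*x1+nu) + a1*x1 + a3) - (3*x1^2 + 2*a2*x1 + a4 - a1*(l*x1+nu)) = c1 - (x1-x2)*(x1-x3)"
    unfolding c1_def x3 by algebra
  thus "l*(2*(l*x1+nu) + a1*x1 + a3) - (3*x1^2 + 2*a2*x1 + a4 - a1*(l*x1+nu)) = - (x1-x2)*(x1-x3)"
    using c1 by (simp add: algebra_simps)
qed
lemma tangc:
  fixes x1 x3 l nu a1 a2 a3 a4 a6 :: rat
  assumes 
  "(l*x1+nu)^2 + a1*x1*(l*x1+nu) + a3*(l*x1+nu) = x1^3 + a2*x1^2 + a4*x1 + a6"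
  and "l*(2*(l*x1+nu) + a1*x1 + a3) = 3*x1^2 + 2*a2*x1 + a4 - a1*(l*x1+nu)"
  and "x3 = l^2 + a1*l - a2 - x1 - x1"
  shows "(l*x3+nu)^2 + a1*x3*(l*x3+nu) + a3*(l*x3+nu) = x3^3 + a2*x3^2 + a4*x3 + a6"
  using assms by algebra


definition neg :: "wcurve \<Rightarrow> qpoint \<Rightarrow> qpoint" where
  "neg E P = (case P of None \<Rightarrow> None | Some (x, y) \<Rightarrow>
     Some (x, - y - of_int (wa1 E)*x - of_int (wa3 E)))"

lemma padd_None1[simp]: "padd E None Q = Q" by (simp add: padd_def)
lemma padd_None2[simp]: "padd E P None = P" by (cases P) (auto simp: padd_def)
lemma neg_None[simp]: "neg E None = None" by (simp add: neg_def)
lemma neg_Some[simp]: "neg E (Some (x,y)) = Some (x, - y - of_int (wa1 E)*x - of_int (wa3 E))"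
  by (simp add: neg_def)

lemma padd_SS_None:
  "x1 = x2 \<and> y1 + y2 + of_int (wa1 E)*x2 + of_int (wa3 E) = 0 \<Longrightarrow>
   padd E (Some (x1,y1)) (Some (x2,y2)) = None"
  by (simp add: padd_def)

lemma padd_SS:
  assumes "\<not> (x1 = x2 \<and> y1 + y2 + of_int (wa1 E)*x2 + of_int (wa3 E) = 0)"
  and "l = (if x1 = x2 then (3*x1^2 + 2*of_int (wa2 E)*x1 + of_int (wa4 E) - of_int (wa1 E)*y1)
                / (2*y1 + of_int (wa1 E)*x1 + of_int (wa3 E))
            else (y2 - y1) / (x2 - x1))"
  shows "padd E (Some (x1,y1)) (Some (x2,y2)) =
    Some (l^2 + of_int (wa1 E)*l - of_int (wa2 E) - x1 - x2,
          - (l + of_int (wa1 E))*(l^2 + of_int (wa1 E)*l - of_int (wa2 E) - x1 - x2)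
           - (y1 - l*x1) - of_int (wa3 E))"
  using assms by (simp add: padd_def Let_def)

lemma on_curve_Some: "on_curve E (Some (x,y)) \<longleftrightarrow>
   y^2 + of_int (wa1 E)*x*y + of_int (wa3 E)*y
       = x^3 + of_int (wa2 E)*x^2 + of_int (wa4 E)*x + of_int (wa6 E)"
  by (simp add: on_curve_def)

lemma negcurve_alg:
  fixes x y a1 a3 :: rat
  shows "(- y - a1*x - a3)^2 + a1*x*(- y - a1*x - a3) + a3*(- y - a1*x - a3) = y^2 + a1*x*y + a3*y"
  by algebra

lemma on_curve_neg: "on_curve E P \<Longrightarrow> on_curve E (neg E P)"
  by (cases P) (auto simp: on_curve_Some negcurve_alg)

lemma neg_neg[simp]: "neg E (neg E P) = P"
  by (cases P) auto

lemma same_x: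
  fixes x y1 y2 a1 a2 a3 a4 a6 :: rat
  assumes "y1^2 + a1*x*y1 + a3*y1 = x^3 + a2*x^2 + a4*x + a6"
    "y2^2 + a1*x*y2 + a3*y2 = x^3 + a2*x^2 + a4*x + a6"
  shows "y2 = y1 \<or> y1 + y2 + a1*x + a3 = 0"
proof -
  have "(y2 - y1) * (y1 + y2 + a1*x + a3) = 0" using assms by algebra
  thus ?thesis by simp
qed

lemma disc_sing:
  assumes "on_curve E (Some (x,y))"
    "2*y + of_int (wa1 E)*x + of_int (wa3 E) = 0"
    "3*x^2 + 2*of_int (wa2 E)*x + of_int (wa4 E) - of_int (wa1 E)*y = 0"
  shows "disc E = 0"
proof -
  have "(of_int (disc E) :: rat) = 0"
    using sing1[of y "of_int (wa1 E)" x "of_int (wa3 E)" "of_int (wa2 E)" "of_int (wa4 E)" "of_int (wa6 E)"]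
      assms unfolding disc_def Let_def on_curve_Some by simp
  thus ?thesis by simp
qed

lemma padd_on_curve:
  assumes cP: "on_curve E P" and cQ: "on_curve E Q"
  shows "on_curve E (padd E P Q)"
proof (cases P)
  case None thus ?thesis using cQ by simp
next
  case (Some pp)
  then obtain x1 y1 where P: "P = Some (x1,y1)" by (cases pp) auto
  show ?thesis
  proof (cases Q)
    case None thus ?thesis using cP by simp
  next
    case (Some qq)
    then obtain x2 y2 where Q: "Q = Some (x2,y2)" by (cases qq) auto
    define A1 where "A1 = (of_int (wa1 E) :: rat)"
    define A2 where "A2 = (of_int (wa2 E) :: rat)"
    define A3 where "A3 = (of_int (wa3 E) :: rat)"
    define A4 where "A4 = (of_int (wa4 E) :: rat)"
    define A6 where "A6 = (of_int (wa6 E) :: rat)"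
    have c1: "y1^2 + A1*x1*y1 + A3*y1 = x1^3 + A2*x1^2 + A4*x1 + A6"
      using cP P by (simp add: on_curve_Some A1_def A2_def A3_def A4_def A6_def)
    have c2: "y2^2 + A1*x2*y2 + A3*y2 = x2^3 + A2*x2^2 + A4*x2 + A6"
      using cQ Q by (simp add: on_curve_Some A1_def A2_def A3_def A4_def A6_def)
    show ?thesis
    proof (cases "x1 = x2 \<and> y1 + y2 + A1*x2 + A3 = 0")
      case True thus ?thesis using P Q padd_SS_None[of x1 x2 y1 y2 E]
        by (simp add: A1_def A3_def on_curve_def)
    next
      case False
      define l where "l = (if x1 = x2 then (3*x1^2 + 2*A2*x1 + A4 - A1*y1)
                / (2*y1 + A1*x1 + A3) else (y2 - y1) / (x2 - x1))"
      define nu where "nu = y1 - l*x1"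
      define x3 where "x3 = l^2 + A1*l - A2 - x1 - x2"
      have eq: "padd E P Q = Some (x3, - (l + A1)*x3 - nu - A3)"
        unfolding P Q x3_def nu_def A1_def A2_def A3_def
        by (rule padd_SS) (use False in \<open>simp_all add: l_def A1_def A2_def A3_def A4_def\<close>)
      have y1: "y1 = l*x1 + nu" by (simp add: nu_def)
      have L: "(l*x3+nu)^2 + A1*x3*(l*x3+nu) + A3*(l*x3+nu) = x3^3 + A2*x3^2 + A4*x3 + A6"
      proof (cases "x1 = x2")
        case True
        hence "y2 = y1" using same_x[OF c1] c2 False by auto
        hence f: "2*y1 + A1*x1 + A3 \<noteq> 0" using False True by auto
        have "l*(2*y1 + A1*x1 + A3) = 3*x1^2 + 2*A2*x1 + A4 - A1*y1"
          using f True by (simp add: l_def)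
        hence t1: "l*(2*(l*x1+nu) + A1*x1 + A3) = 3*x1^2 + 2*A2*x1 + A4 - A1*(l*x1+nu)"
          unfolding y1[symmetric] .
        have c1': "(l*x1+nu)^2 + A1*x1*(l*x1+nu) + A3*(l*x1+nu) = x1^3 + A2*x1^2 + A4*x1 + A6"
          unfolding y1[symmetric] by (rule c1)
        have "x3 = l^2 + A1*l - A2 - x1 - x1" using True by (simp add: x3_def)
        from tangc[OF c1' t1 this] show ?thesis .
      next
        case False
        have lx: "l*(x2-x1) = y2-y1" using False by (simp add: l_def)
        have "l*x2 + nu = l*(x2-x1) + y1" by (simp add: nu_def algebra_simps)
        hence y2: "y2 = l*x2 + nu" using lx by simp
        have c1': "(l*x1+nu)^2 + A1*x1*(l*x1+nu) + A3*(l*x1+nu) = x1^3 + A2*x1^2 + A4*x1 + A6"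
          unfolding y1[symmetric] by (rule c1)
        have c2': "(l*x2+nu)^2 + A1*x2*(l*x2+nu) + A3*(l*x2+nu) = x2^3 + A2*x2^2 + A4*x2 + A6"
          unfolding y2[symmetric] by (rule c2)
        from chord_aux(1)[OF False c1' c2' x3_def] show ?thesis .
      qed
      have N: "on_curve E (neg E (Some (x3, l*x3+nu)))"
        by (rule on_curve_neg) (use L in \<open>simp add: on_curve_Some A1_def A2_def A3_def A4_def A6_def\<close>)
      have e2: "neg E (Some (x3, l*x3+nu)) = padd E P Q"
        unfolding eq by (simp add: A1_def A3_def algebra_simps)
      show ?thesis using N unfolding e2 .
    qed
  qed
qed



lemma negadd:
  assumes ell: "elliptic E" and cP: "on_curve E P" and cS: "on_curve E S"
  shows "padd E P (neg E (padd E P S)) = neg E S"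
proof (cases P)
  case None thus ?thesis by simp
next
  case (Some pp)
  then obtain x1 y1 where P: "P = Some (x1,y1)" by (cases pp) auto
  define A1 where "A1 = (of_int (wa1 E) :: rat)"
  define A2 where "A2 = (of_int (wa2 E) :: rat)"
  define A3 where "A3 = (of_int (wa3 E) :: rat)"
  define A4 where "A4 = (of_int (wa4 E) :: rat)"
  define A6 where "A6 = (of_int (wa6 E) :: rat)"
  have c1: "y1^2 + A1*x1*y1 + A3*y1 = x1^3 + A2*x1^2 + A4*x1 + A6"
    using cP P by (simp add: on_curve_Some A1_def A2_def A3_def A4_def A6_def)
  show ?thesis
  proof (cases S)
    case None
    thus ?thesis using P by (simp add: padd_SS_None)
  next
    case (Some qq)
    then obtain x2 y2 where S: "S = Some (x2,y2)" by (cases qq) auto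
    have c2: "y2^2 + A1*x2*y2 + A3*y2 = x2^3 + A2*x2^2 + A4*x2 + A6"
      using cS S by (simp add: on_curve_Some A1_def A2_def A3_def A4_def A6_def)
    show ?thesis
    proof (cases "x1 = x2 \<and> y1 + y2 + A1*x2 + A3 = 0")
      case True
      hence "padd E P S = None" using P S padd_SS_None[of x1 x2 y1 y2 E]
        by (simp add: A1_def A3_def)
      moreover have "neg E S = P" using True P S by (simp add: A1_def A3_def algebra_simps)
      ultimately show ?thesis by simp
    next
      case False
      define l where "l = (if x1 = x2 then (3*x1^2 + 2*A2*x1 + A4 - A1*y1)
                / (2*y1 + A1*x1 + A3) else (y2 - y1) / (x2 - x1))"
      define nu where "nu = y1 - l*x1"
      define x3 where "x3 = l^2 + A1*l - A2 - x1 - x2"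
      have eq: "padd E P S = Some (x3, - (l + A1)*x3 - nu - A3)"
        unfolding P S x3_def nu_def A1_def A2_def A3_def
        by (rule padd_SS) (use False in \<open>simp_all add: l_def A1_def A2_def A3_def A4_def\<close>)
      have negT: "neg E (padd E P S) = Some (x3, l*x3 + nu)"
        unfolding eq by (simp add: A1_def A3_def algebra_simps)
      have y1: "y1 = l*x1 + nu" by (simp add: nu_def)
      have y2: "y2 = l*x2 + nu"
      proof (cases "x1 = x2")
        case True
        hence "y2 = y1" using same_x[OF c1] c2 False by auto
        thus ?thesis using y1 True by simp
      next
        case False
        have lx: "l*(x2-x1) = y2-y1" using False by (simp add: l_def)
        have "l*x2 + nu = l*(x2-x1) + y1" by (simp add: nu_def algebra_simps)
        thus ?thesis using lx by simp
      qed
      have negS: "neg E S = Some (x2, - y2 - A1*x2 - A3)" using S by (simp add: A1_def A3_def)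
      show ?thesis
      proof (cases "x1 = x3")
        case x13: True
        have PT: "Some (x3, l*x3 + nu) = P" using x13 y1 P by simp
        show ?thesis
        proof (cases "x1 = x2")
          case True
          hence "y2 = y1" using y1 y2 by simp
          hence SP: "S = P" using True P S by simp
          have "padd E P (neg E (padd E P S)) = padd E P S" using negT PT SP by simp
          also have "\<dots> = Some (x3, - (l + A1)*x3 - nu - A3)" by (rule eq)
          also have "\<dots> = neg E S" using negS x13 True y1 y2 by (simp add: algebra_simps)
          finally show ?thesis .
        next
          case x12: False
          have c1': "(l*x1+nu)^2 + A1*x1*(l*x1+nu) + A3*(l*x1+nu) = x1^3 + A2*x1^2 + A4*x1 + A6"
            unfolding y1[symmetric] by (rule c1)
          have c2': "(l*x2+nu)^2 + A1*x2*(l*x2+nu) + A3*(l*x2+nu) = x2^3 + A2*x2^2 + A4*x2 + A6"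
            unfolding y2[symmetric] by (rule c2)
          have "l*(2*(l*x1+nu) + A1*x1 + A3) - (3*x1^2 + 2*A2*x1 + A4 - A1*(l*x1+nu)) = 0"
            using chord_aux(2)[OF x12 c1' c2' x3_def] x13 by simp
          hence tg: "l*(2*y1 + A1*x1 + A3) = 3*x1^2 + 2*A2*x1 + A4 - A1*y1"
            using y1 by simp
          have f: "2*y1 + A1*x1 + A3 \<noteq> 0"
          proof
            assume f0: "2*y1 + A1*x1 + A3 = 0"
            hence "3*x1^2 + 2*A2*x1 + A4 - A1*y1 = 0" using tg by simp
            hence "disc E = 0" using disc_sing[of E x1 y1] f0 cP P
              by (simp add: A1_def A2_def A3_def A4_def)
            thus False using ell by (simp add: elliptic_def)
          qed
          have ll: "l = (3*x1^2 + 2*A2*x1 + A4 - A1*y1) / (2*y1 + A1*x1 + A3)"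
            using tg f by (simp add: field_simps)
          have x2e: "x2 = l^2 + A1*l - A2 - x1 - x1" using x13 by (simp add: x3_def)
          have "padd E P (neg E (padd E P S)) = padd E (Some (x1,y1)) (Some (x1,y1))"
            using negT PT P by simp
          also have "\<dots> = Some (l^2 + A1*l - A2 - x1 - x1,
               - (l + A1)*(l^2 + A1*l - A2 - x1 - x1) - (y1 - l*x1) - A3)"
            unfolding A1_def A2_def A3_def
            by (rule padd_SS) (use f ll in \<open>simp_all add: A1_def A2_def A3_def A4_def\<close>)
          also have "\<dots> = neg E S" unfolding negS x2e[symmetric] using y2
            by (simp add: nu_def algebra_simps)
          finally show ?thesis .
        qed
      next
        case x13: False
        have ll: "l = (l*x3 + nu - y1) / (x3 - x1)"
          using x13 y1 by (simp add: field_simps)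
        have x2e: "x2 = l^2 + A1*l - A2 - x1 - x3" by (simp add: x3_def)
        have "padd E P (neg E (padd E P S)) = padd E (Some (x1,y1)) (Some (x3,l*x3+nu))"
          using negT P by simp
        also have "\<dots> = Some (l^2 + A1*l - A2 - x1 - x3,
             - (l + A1)*(l^2 + A1*l - A2 - x1 - x3) - (y1 - l*x1) - A3)"
          unfolding A1_def A2_def A3_def
          by (rule padd_SS) (use x13 ll in \<open>simp_all\<close>)
        also have "\<dots> = neg E S" unfolding negS x2e[symmetric] using y2
          by (simp add: nu_def algebra_simps)
        finally show ?thesis .
      qed
    qed
  qed
qed

lemma pmult_on_curve: "on_curve E P \<Longrightarrow> on_curve E (pmult E n P)"
proof (induction n)
  case 0 thus ?case by (simp add: on_curve_def)
next
  case (Suc n) thus ?case by (simp add: padd_on_curve)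
qed

lemma pmult_2: "pmult E 2 P = padd E P P"
  by (simp add: numeral_2_eq_2)

lemma no_2tors:
  assumes ell: "elliptic E" and cP: "on_curve E P" and inf: "infinite_order E P"
    and n: "n \<ge> 1"
  shows "pmult E 2 (pmult E n P) \<noteq> None"
proof
  assume h: "pmult E 2 (pmult E n P) = None"
  define Q where "Q = pmult E n P"
  have QN: "Q \<noteq> None" using inf n by (simp add: infinite_order_def Q_def)
  then obtain x y where Q: "Q = Some (x,y)" by auto
  have "padd E Q Q = None" using h by (simp add: pmult_2 Q_def)
  hence "x = x \<and> y + y + of_int (wa1 E)*x + of_int (wa3 E) = 0"
    using Q by (simp add: padd_def Let_def split: if_splits)
  hence negQ: "neg E Q = Q" using Q by (simp add: algebra_simps)
  have key: "k \<le> n \<Longrightarrow> pmult E (n+k) P = neg E (pmult E (n-k) P)" for k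
  proof (induction k)
    case 0 thus ?case using negQ by (simp add: Q_def)
  next
    case (Suc k)
    hence IH: "pmult E (n+k) P = neg E (pmult E (n-k) P)" by simp
    have nk: "n - k = Suc (n - Suc k)" using Suc.prems by simp
    have "pmult E (n + Suc k) P = padd E P (pmult E (n+k) P)" by simp
    also have "\<dots> = padd E P (neg E (padd E P (pmult E (n - Suc k) P)))"
      using IH nk by simp
    also have "\<dots> = neg E (pmult E (n - Suc k) P)"
      by (rule negadd[OF ell cP pmult_on_curve[OF cP]])
    finally show ?case .
  qed
  have "pmult E (n+n) P = None" using key[of n] by simp
  moreover have "pmult E (n+n) P \<noteq> None" using inf n by (simp add: infinite_order_def)
  ultimately show False by simp
qed



lemma coprime_add_mult_int: "coprime (s::int) (r + s*k) \<longleftrightarrow> coprime s r"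
  by (metis coprime_iff_gcd_eq_1 gcd_add_mult mult.commute add.commute)

lemma rep_exists:
  fixes x y :: rat and a1 a2 a3 a4 a6 :: int
  assumes eq: "y^2 + of_int a1*x*y + of_int a3*y
       = x^3 + of_int a2*x^2 + of_int a4*x + of_int a6"
  shows "\<exists>a b d. d > 0 \<and> coprime a d \<and> coprime b d \<and>
     x = of_int a / of_int d^2 \<and> y = of_int b / of_int d^3"
proof -
  obtain r s where qx: "quotient_of x = (r,s)" by (cases "quotient_of x")
  obtain t w where qy: "quotient_of y = (t,w)" by (cases "quotient_of y")
  have s0: "s > 0" and crs: "coprime r s" and xrs: "x = of_int r / of_int s"
    using qx quotient_of_denom_pos quotient_of_coprime quotient_of_div by blast+
  have w0: "w > 0" and ctw: "coprime t w" and ytw: "y = of_int t / of_int w"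
    using qy quotient_of_denom_pos quotient_of_coprime quotient_of_div by blast+
  define C where "C = r^3 + s*(a2*r^2 + a4*r*s + a6*s^2)"
  have ieq: "t^2*s^3 + a1*r*t*s^2*w + a3*t*s^3*w = w^2 * C"
  proof -
    have L: "(of_int (t^2*s^3 + a1*r*t*s^2*w + a3*t*s^3*w) :: rat)
       = (of_int s)^3*(of_int w)^2 * (y^2 + of_int a1*x*y + of_int a3*y)"
      using s0 w0 unfolding xrs ytw by (simp add: field_simps power2_eq_square power3_eq_cube)
    have Rr: "(of_int (w^2 * C) :: rat)
       = (of_int s)^3*(of_int w)^2 * (x^3 + of_int a2*x^2 + of_int a4*x + of_int a6)"
      using s0 w0 unfolding xrs ytw C_def by (simp add: field_simps power2_eq_square power3_eq_cube)
    have "(of_int (t^2*s^3 + a1*r*t*s^2*w + a3*t*s^3*w) :: rat) = of_int (w^2 * C)"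
      unfolding L Rr eq ..
    thus ?thesis by (simp only: of_int_eq_iff)
  qed
  have csC: "coprime s C" unfolding C_def coprime_add_mult_int using crs
    by (simp add: coprime_commute)
  have "s^2 dvd w^2 * C" unfolding ieq[symmetric]
    by (rule dvd_add) + (simp_all add: power2_eq_square power3_eq_cube)
  hence "s^2 dvd w^2" using csC by (simp add: coprime_dvd_mult_left_iff)
  hence "s dvd w" by simp
  then obtain m where wm: "w = s*m" by blast
  have m0: "m > 0" using w0 s0 wm by (simp add: zero_less_mult_iff)
  define K where "K = t^2 + a1*r*t*m + a3*t*s*m"
  have "s^2 * (s*K) = s^2 * (m^2 * C)" using ieq unfolding wm K_def
    by (simp add: algebra_simps power2_eq_square power3_eq_cube)
  hence sK: "s*K = m^2*C" using s0 by simp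
  have "s dvd m^2*C" unfolding sK[symmetric] by simp
  hence sm2: "s dvd m^2" using csC by (simp add: coprime_dvd_mult_left_iff)
  have cmt: "coprime m t" using ctw wm by (simp add: coprime_commute)
  have "m dvd s*K" unfolding sK by (simp add: power2_eq_square)
  moreover have "s*K = s*t^2 + m*(s*(a1*r*t + a3*t*s))" unfolding K_def by (simp add: algebra_simps)
  ultimately have "m dvd s*t^2" by (metis dvd_add_left_iff dvd_triv_left)
  hence "m dvd s" using cmt by (simp add: coprime_dvd_mult_left_iff)
  then obtain k where sk: "s = m*k" by blast
  have k0: "k > 0" using s0 m0 sk by (simp add: zero_less_mult_iff)
  have "m * (k*K) = m * (m*C)" using sK unfolding sk by (simp add: algebra_simps power2_eq_square)
  hence kK: "k*K = m*C" using m0 by simp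
  have "m dvd k*K" unfolding kK by simp
  moreover have "k*K = k*t^2 + m*(k*(a1*r*t + a3*t*s))" unfolding K_def by (simp add: algebra_simps)
  ultimately have "m dvd k*t^2" by (metis dvd_add_left_iff dvd_triv_left)
  hence mk: "m dvd k" using cmt by (simp add: coprime_dvd_mult_left_iff)
  have ckC: "coprime k C" using csC sk by simp
  have "k dvd m*C" unfolding kK[symmetric] by simp
  hence km: "k dvd m" using ckC by (simp add: coprime_dvd_mult_left_iff)
  have "k = m" using mk km k0 m0 by (simp add: zdvd_antisym_nonneg)
  hence s2: "s = m^2" and w3: "w = m^3" using sk wm by (simp_all add: power2_eq_square power3_eq_cube)
  have "coprime r m" using crs s2 by simp
  moreover have "coprime t m" using ctw w3 by simp
  ultimately show ?thesis using m0 xrs ytw s2 w3 by (intro exI[of _ r] exI[of _ t] exI[of _ m]) simp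
qed

lemma rep_unique:
  fixes a d a' d' :: int
  assumes "d > 0" "d' > 0" "coprime a d" "coprime a' d'"
    "(of_int a / of_int d^2 :: rat) = of_int a' / of_int d'^2"
  shows "d = d'"
proof -
  have "(of_int (a*d'^2) :: rat) = of_int (a'*d^2)" using assms by (simp add: field_simps)
  hence e: "a*d'^2 = a'*d^2" by (simp only: of_int_eq_iff)
  have "d^2 dvd a*d'^2" unfolding e by simp
  hence "d^2 dvd d'^2" using assms(3) by (simp add: coprime_dvd_mult_right_iff coprime_commute)
  hence 1: "d dvd d'" by simp
  have "d'^2 dvd a'*d^2" unfolding e[symmetric] by simp
  hence "d'^2 dvd d^2" using assms(4) by (simp add: coprime_dvd_mult_right_iff coprime_commute)
  hence 2: "d' dvd d" by simp
  show ?thesis using 1 2 assms(1,2) by (simp add: zdvd_antisym_nonneg)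
qed

lemma dnum_eq:
  assumes "d > 0" "coprime a d" "coprime b d"
  shows "dnum (Some (of_int a / of_int d^2, of_int b / of_int d^3)) = d"
  unfolding dnum_def
proof (rule the_equality)
  show "\<exists>a' b'. d > 0 \<and> gcd a' d = 1 \<and> gcd b' d = 1 \<and>
     Some (of_int a / of_int d^2, of_int b / of_int d^3) = Some (of_int a' / of_int d^2, of_int b' / of_int d^3)"
    using assms by (intro exI[of _ a] exI[of _ b]) (simp add: coprime_iff_gcd_eq_1)
next
  fix d' assume "\<exists>a' b'. d' > 0 \<and> gcd a' d' = 1 \<and> gcd b' d' = 1 \<and>
     Some (of_int a / of_int d^2, of_int b / of_int d^3) = Some (of_int a' / (of_int d'^2::rat), of_int b' / of_int d'^3)"
  then obtain a' b' where h: "d' > 0" "coprime a' d'"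
    "(of_int a / of_int d^2 :: rat) = of_int a' / of_int d'^2" by auto
  show "d' = d" using rep_unique[OF h(1) assms(1) h(2) assms(2)] h(3) by simp
qed



lemma mult0_iff: "prime (p::int) \<Longrightarrow> x \<noteq> 0 \<Longrightarrow> multiplicity p x = 0 \<longleftrightarrow> \<not> p dvd x"
  using prime_multiplicity_gt_zero_iff[of p x] by auto

lemma in_pmax_frac:
  fixes p m n :: int
  assumes p: "prime p" and n0: "n \<noteq> 0" and pn: "\<not> p dvd n"
  shows "in_pmax p (of_int m / of_int n) \<longleftrightarrow> p dvd m"
proof -
  obtain m' n' where q: "quotient_of (of_int m / of_int n) = (m', n')"
    by (cases "quotient_of (of_int m / of_int n :: rat)")
  have n'0: "n' > 0" and c: "coprime m' n'" and e: "(of_int m / of_int n :: rat) = of_int m' / of_int n'"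
    using q quotient_of_denom_pos quotient_of_coprime quotient_of_div by blast+
  have "(of_int (m*n') :: rat) = of_int (m'*n)" using e n0 n'0 by (simp add: field_simps)
  hence E: "m*n' = m'*n" by (simp only: of_int_eq_iff)
  have "n' dvd m'*n" unfolding E[symmetric] by simp
  hence "n' dvd n" using c by (simp add: coprime_dvd_mult_right_iff coprime_commute)
  hence pn': "\<not> p dvd n'" using pn by (meson dvd_trans)
  have "p dvd m' \<longleftrightarrow> p dvd m"
  proof
    assume "p dvd m'" hence "p dvd m*n'" unfolding E by simp
    thus "p dvd m" using p pn' by (simp add: prime_dvd_mult_iff)
  next
    assume "p dvd m" hence "p dvd m'*n" unfolding E[symmetric] by simp
    thus "p dvd m'" using p pn by (simp add: prime_dvd_mult_iff)
  qed
  thus ?thesis using q pn' by (simp add: in_pmax_def)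
qed

lemma padic_unit_frac:
  fixes p m n :: int
  assumes p: "prime p" and m0: "m \<noteq> 0" and n0: "n \<noteq> 0"
  shows "padic_unit p (of_int m / of_int n) \<longleftrightarrow> multiplicity p m = multiplicity p n"
proof -
  obtain m' n' where q: "quotient_of (of_int m / of_int n) = (m', n')"
    by (cases "quotient_of (of_int m / of_int n :: rat)")
  have n'0: "n' > 0" and c: "coprime m' n'" and e: "(of_int m / of_int n :: rat) = of_int m' / of_int n'"
    using q quotient_of_denom_pos quotient_of_coprime quotient_of_div by blast+
  have "(of_int (m*n') :: rat) = of_int (m'*n)" using e n0 n'0 by (simp add: field_simps)
  hence E: "m*n' = m'*n" by (simp only: of_int_eq_iff)
  have m'0: "m' \<noteq> 0" using E m0 n'0 by auto
  have pe: "prime_elem p" using p by (rule prime_imp_prime_elem)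
  have V: "multiplicity p m + multiplicity p n' = multiplicity p m' + multiplicity p n"
    using arg_cong[OF E, of "multiplicity p"] m0 n0 m'0 n'0
    by (simp add: prime_elem_multiplicity_mult_distrib[OF pe])
  have "padic_unit p (of_int m / of_int n) \<longleftrightarrow> multiplicity p m' = 0 \<and> multiplicity p n' = 0"
    using q mult0_iff[OF p m'0] mult0_iff[OF p, of n'] n'0 by (simp add: padic_unit_def)
  also have "\<dots> \<longleftrightarrow> multiplicity p m = multiplicity p n"
  proof
    assume "multiplicity p m' = 0 \<and> multiplicity p n' = 0" thus "multiplicity p m = multiplicity p n"
      using V by simp
  next
    assume h: "multiplicity p m = multiplicity p n"
    hence eq: "multiplicity p n' = multiplicity p m'" using V by simp
    have "\<not> (p dvd m' \<and> p dvd n')"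
    proof
      assume "p dvd m' \<and> p dvd n'"
      hence "p dvd gcd m' n'" by simp
      hence "p dvd 1" using c by simp
      thus False using p not_prime_unit by blast
    qed
    thus "multiplicity p m' = 0 \<and> multiplicity p n' = 0"
      using eq mult0_iff[OF p m'0] mult0_iff[OF p, of n'] n'0 by auto
  qed
  finally show ?thesis .
qed

lemma all_units_iff:
  fixes v :: rat
  shows "(\<forall>q::int. prime q \<longrightarrow> padic_unit q v) \<longleftrightarrow> \<bar>v\<bar> = 1"
proof -
  obtain m n where q: "quotient_of v = (m, n)" by (cases "quotient_of v")
  have n0: "n > 0" and e: "v = of_int m / of_int n"
    using q quotient_of_denom_pos quotient_of_div by blast+
  show ?thesis
  proof
    assume h: "\<forall>q::int. prime q \<longrightarrow> padic_unit q v"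
    hence h1: "\<forall>q::int. prime q \<longrightarrow> \<not> q dvd m \<and> \<not> q dvd n" using q by (simp add: padic_unit_def)
    have "n = 1"
    proof (rule ccontr)
      assume "n \<noteq> 1"
      hence "\<not> is_unit n" using n0 by simp
      then obtain q where "prime q" "q dvd n" using n0 prime_divisor_exists[of n] by auto
      thus False using h1 by auto
    qed
    moreover have "\<bar>m\<bar> = 1"
    proof (rule ccontr)
      assume a: "\<bar>m\<bar> \<noteq> 1"
      show False
      proof (cases "m = 0")
        case True thus False using h1[rule_format, of 2] by simp
      next
        case False
        hence "\<not> is_unit m" using a by simp
        then obtain q where "prime q" "q dvd m" using False prime_divisor_exists[of m] by auto
        thus False using h1 by auto
      qed
    qed
    ultimately have "v = of_int m" "\<bar>m\<bar> = 1" using e by simp_all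
    thus "\<bar>v\<bar> = 1" by (metis of_int_abs of_int_1)
  next
    assume "\<bar>v\<bar> = 1"
    hence "v = 1 \<or> v = -1" by auto
    thus "\<forall>q::int. prime q \<longrightarrow> padic_unit q v"
      by (auto simp: padic_unit_def prime_int_iff)
  qed
qed

lemma val_lemma:
  fixes p M e a' X :: int
  assumes p: "prime p" and pM: "\<not> p dvd M" and E: "M*e^2 = a'*X^2"
    and c: "coprime a' e" and e0: "e \<noteq> 0" and X0: "X \<noteq> 0"
  shows "multiplicity p e = multiplicity p X"
proof -
  have pe: "prime_elem p" using p by (rule prime_imp_prime_elem)
  have M0: "M \<noteq> 0" using pM by auto
  have a0: "a' \<noteq> 0" using E M0 e0 X0 by auto
  have V: "multiplicity p M + 2*multiplicity p e = multiplicity p a' + 2*multiplicity p X"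
    using arg_cong[OF E, of "multiplicity p"] M0 e0 X0 a0
    by (simp add: prime_elem_multiplicity_mult_distrib[OF pe] prime_elem_multiplicity_power_distrib[OF pe])
  have vM: "multiplicity p M = 0" using mult0_iff[OF p M0] pM by simp
  show ?thesis
  proof (cases "p dvd e")
    case True
    hence "\<not> p dvd a'"
    proof -
      { assume "p dvd a'" hence "p dvd gcd a' e" using True by simp
        hence "p dvd 1" using c by simp
        hence False using p not_prime_unit by blast }
      thus ?thesis by blast
    qed
    hence "multiplicity p a' = 0" using mult0_iff[OF p a0] by simp
    thus ?thesis using V vM by simp
  next
    case False
    hence "multiplicity p e = 0" using mult0_iff[OF p e0] by simp
    thus ?thesis using V vM by simp
  qed
qed



lemma decomp:
  fixes p D N :: int
  assumes p: "prime p"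
  shows "D \<noteq> 0 \<Longrightarrow> \<exists>k D1 N1. D = p^k*D1 \<and> N = p^k*N1 \<and> (\<not> p dvd D1 \<or> \<not> p dvd N1)"
proof (induction "nat \<bar>D\<bar>" arbitrary: D N rule: less_induct)
  case less
  show ?case
  proof (cases "p dvd D \<and> p dvd N")
    case False thus ?thesis by (intro exI[of _ 0] exI[of _ D] exI[of _ N]) auto
  next
    case True
    then obtain D' N' where DD: "D = p*D'" and NN: "N = p*N'" by (auto elim!: dvdE)
    have p1: "p > 1" using p by (simp add: prime_int_iff)
    have D'0: "D' \<noteq> 0" using DD less.prems by auto
    have "\<bar>D'\<bar> < \<bar>D\<bar>" using DD p1 D'0 by (simp add: abs_mult)
    hence "nat \<bar>D'\<bar> < nat \<bar>D\<bar>" by simp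
    from less.hyps[OF this D'0, of N'] obtain k D1 N1 where
      h: "D' = p^k*D1" "N' = p^k*N1" "\<not> p dvd D1 \<or> \<not> p dvd N1" by blast
    show ?thesis using h DD NN by (intro exI[of _ "Suc k"] exI[of _ D1] exI[of _ N1]) simp
  qed
qed

lemma M_alg:
  fixes a b d a1 a2 a3 a4 a6 :: int
  assumes Cu: "b^2 + a1*a*b*d + a3*b*d^3 = a^3 + a2*a^2*d^2 + a4*a*d^4 + a6*d^6"
  shows "(let D = 2*b + a1*a*d + a3*d^3; N = 3*a^2 + 2*a2*a*d^2 + a4*d^4 - a1*b*d
          in N^2 + a1*N*d*D - a2*d^2*D^2 - 2*a*D^2 - a^4) =
     d * (let D = 2*b + a1*a*d + a3*d^3; N = 3*a^2 + 2*a2*a*d^2 + a4*d^4 - a1*b*d;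
              N' = 2*a2*a*d + a4*d^3 - a1*b; D' = a1*a + a3*d^2
          in 6*a^2*N' + d*N'^2 + a1*N*D - a2*d*D^2 - 2*a*(4*b*D' + d*D'^2)
             + 8*a*(a1*a*b + a3*b*d^2 - a2*a^2*d - a4*a*d^3 - a6*d^5))"
  using Cu unfolding Let_def by algebra



lemma part1:
  fixes p :: int
  assumes p: "prime p" and cQ: "on_curve E Q" and QN: "Q \<noteq> None"
    and T: "pmult E 2 Q \<noteq> None"
  shows "nonsing_red E p Q \<longleftrightarrow> padic_unit p (u2 E Q)"
proof -
  define a1 where "a1 = wa1 E"
  define a2 where "a2 = wa2 E"
  define a3 where "a3 = wa3 E"
  define a4 where "a4 = wa4 E"
  define a6 where "a6 = wa6 E"
  obtain x y where Q: "Q = Some (x,y)" using QN by auto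
  have cxy: "y^2 + of_int a1*x*y + of_int a3*y = x^3 + of_int a2*x^2 + of_int a4*x + of_int a6"
    using cQ Q by (simp add: on_curve_Some a1_def a2_def a3_def a4_def a6_def)
  obtain a b d where d0: "d > 0" and cad: "coprime a d" and cbd: "coprime b d"
    and xa: "x = of_int a / of_int d^2" and yb: "y = of_int b / of_int d^3"
    using rep_exists[OF cxy] by blast
  have dQ: "dnum Q = d" using dnum_eq[OF d0 cad cbd] Q xa yb by simp
  have dr: "(of_int d :: rat) \<noteq> 0" using d0 by simp
  define D where "D = 2*b + a1*a*d + a3*d^3"
  define N where "N = 3*a^2 + 2*a2*a*d^2 + a4*d^4 - a1*b*d"
  define M where "M = N^2 + a1*N*d*D - a2*d^2*D^2 - 2*a*D^2"
  have Cu: "b^2 + a1*a*b*d + a3*b*d^3 = a^3 + a2*a^2*d^2 + a4*a*d^4 + a6*d^6"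
  proof -
    have "(of_int (b^2 + a1*a*b*d + a3*b*d^3) :: rat) = of_int d^6 * (y^2 + of_int a1*x*y + of_int a3*y)"
      unfolding xa yb using dr by (simp add: field_simps eval_nat_numeral)
    also have "\<dots> = of_int d^6 * (x^3 + of_int a2*x^2 + of_int a4*x + of_int a6)" using cxy by simp
    also have "\<dots> = of_int (a^3 + a2*a^2*d^2 + a4*a*d^4 + a6*d^6)"
      unfolding xa yb using dr by (simp add: field_simps eval_nat_numeral)
    finally show ?thesis by (simp only: of_int_eq_iff)
  qed
  have fD: "2*y + of_int a1*x + of_int a3 = of_int D / of_int d^3"
    unfolding xa yb D_def using dr by (simp add: field_simps eval_nat_numeral)
  have fN: "3*x^2 + 2*of_int a2*x + of_int a4 - of_int a1*y = of_int N / of_int d^4"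
    unfolding xa yb N_def using dr by (simp add: field_simps eval_nat_numeral)
  have fN2: "of_int a1*y - 3*x^2 - 2*of_int a2*x - of_int a4 = of_int (-N) / of_int (d^4)"
    using fN by (simp add: field_simps)
  have TT: "padd E Q Q \<noteq> None" using T by (simp add: pmult_2)
  have f0: "2*y + of_int a1*x + of_int a3 \<noteq> 0"
    using TT Q padd_SS_None[of x x y y E] by (auto simp: a1_def a3_def)
  hence D0: "D \<noteq> 0" using fD by auto
  have Dr: "(of_int D :: rat) \<noteq> 0" using D0 by simp
  define l where "l = (3*x^2 + 2*of_int a2*x + of_int a4 - of_int a1*y) / (2*y + of_int a1*x + of_int a3)"
  define X2 where "X2 = l^2 + of_int a1*l - of_int a2 - x - x"
  define Y2 where "Y2 = - (l + of_int a1)*X2 - (y - l*x) - of_int a3"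
  have Q2: "pmult E 2 Q = Some (X2, Y2)"
    unfolding pmult_2 Q X2_def Y2_def a1_def a2_def a3_def
    by (rule padd_SS) (use f0 in \<open>simp_all add: l_def a1_def a2_def a3_def a4_def\<close>)
  have lN: "l = of_int N / (of_int d * of_int D)"
    unfolding l_def fN fD using dr Dr by (simp add: field_simps eval_nat_numeral)
  have X2M: "X2 = of_int M / (of_int d * of_int D)^2"
    unfolding X2_def lN M_def xa using dr Dr by (simp add: field_simps eval_nat_numeral)
  have cQ2: "on_curve E (Some (X2,Y2))" using Q2 pmult_on_curve[OF cQ, of 2] by simp
  have cxy2: "Y2^2 + of_int a1*X2*Y2 + of_int a3*Y2 = X2^3 + of_int a2*X2^2 + of_int a4*X2 + of_int a6"
    using cQ2 by (simp add: on_curve_Some a1_def a2_def a3_def a4_def a6_def)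
  obtain a' b' e where e0: "e > 0" and cae: "coprime a' e" and cbe: "coprime b' e"
    and xa': "X2 = of_int a' / of_int e^2" and yb': "Y2 = of_int b' / of_int e^3"
    using rep_exists[OF cxy2] by blast
  have dQ2: "dnum (pmult E 2 Q) = e" using dnum_eq[OF e0 cae cbe] Q2 xa' yb' by simp
  have er: "(of_int e :: rat) \<noteq> 0" using e0 by simp
  have Eq: "M * e^2 = a' * (d*D)^2"
  proof -
    have "(of_int (M * e^2) :: rat) = of_int (a' * (d*D)^2)"
      using X2M xa' dr Dr er by (simp add: field_simps)
    thus ?thesis by (simp only: of_int_eq_iff)
  qed
  have u2e: "u2 E Q = of_int (d*D) / of_int e"
    unfolding u2_def dQ dQ2 using Q fD dr by (simp add: f2_def a1_def a3_def field_simps eval_nat_numeral)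
  have pe: "prime_elem p" using p by (rule prime_imp_prime_elem)
  have dD0: "d*D \<noteq> 0" using d0 D0 by simp
  have PU: "padic_unit p (u2 E Q) \<longleftrightarrow> multiplicity p (d*D) = multiplicity p e"
    unfolding u2e by (rule padic_unit_frac[OF p dD0]) (use e0 in simp)
  have NS: "nonsing_red E p Q \<longleftrightarrow> p dvd d \<or>
      \<not> (in_pmax p (of_int D / of_int d^3) \<and> in_pmax p (of_int (-N) / of_int (d^4)))"
    using Q dQ fD fN2 by (simp add: nonsing_red_def a1_def a2_def a3_def a4_def)
  show ?thesis
  proof (cases "p dvd d")
    case True
    have "\<not> p dvd a"
    proof
      assume "p dvd a" hence "p dvd gcd a d" using True by simp
      hence "p dvd 1" using cad by simp
      thus False using p not_prime_unit by blast
    qed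
    hence pa4: "\<not> p dvd a^4" using p by (simp add: prime_dvd_power_iff)
    have "M - a^4 = d * (let D = 2*b + a1*a*d + a3*d^3; N = 3*a^2 + 2*a2*a*d^2 + a4*d^4 - a1*b*d;
              N' = 2*a2*a*d + a4*d^3 - a1*b; D' = a1*a + a3*d^2
          in 6*a^2*N' + d*N'^2 + a1*N*D - a2*d*D^2 - 2*a*(4*b*D' + d*D'^2)
             + 8*a*(a1*a*b + a3*b*d^2 - a2*a^2*d - a4*a*d^3 - a6*d^5))"
      using M_alg[OF Cu] unfolding M_def N_def D_def Let_def by simp
    hence "d dvd M - a^4" by (metis dvd_triv_left)
    hence "p dvd M - a^4" using True by (rule dvd_trans[rotated])
    hence pM: "\<not> p dvd M" using pa4 by (metis dvd_diff_commute dvd_diff_right_iff dvd_add_right_iff diff_add_cancel)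
    have "multiplicity p e = multiplicity p (d*D)"
      by (rule val_lemma[OF p pM Eq cae]) (use e0 dD0 in simp_all)
    thus ?thesis using PU NS True by simp
  next
    case pd: False
    have mdz: "multiplicity p d = 0" using mult0_iff[OF p] d0 pd by simp
    have pd3: "\<not> p dvd d^3" "\<not> p dvd d^4" using pd p by (simp_all add: prime_dvd_power_iff)
    have NS2: "nonsing_red E p Q \<longleftrightarrow> \<not> (p dvd D \<and> p dvd N)"
      unfolding NS using pd pd3 in_pmax_frac[OF p, of "d^3" D] in_pmax_frac[OF p, of "d^4" "-N"] d0
      by simp
    obtain k D1 N1 where kD: "D = p^k*D1" and kN: "N = p^k*N1" and nd: "\<not> p dvd D1 \<or> \<not> p dvd N1"
      using decomp[OF p D0] by blast
    have pk0: "p^k \<noteq> 0" using p by (simp add: prime_int_iff)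
    have D10: "D1 \<noteq> 0" using kD D0 by auto
    define M1 where "M1 = N1^2 + a1*N1*d*D1 - a2*d^2*D1^2 - 2*a*D1^2"
    have "M = (p^k)^2 * M1" unfolding M_def M1_def kD kN by (simp add: algebra_simps power2_eq_square)
    hence "(p^k)^2 * (M1*e^2) = (p^k)^2 * (a' * (d*D1)^2)" using Eq unfolding kD
      by (simp add: algebra_simps power2_eq_square)
    hence Eq1: "M1*e^2 = a' * (d*D1)^2" using pk0 by (metis mult_left_cancel power_not_zero)
    have mpk: "multiplicity p (p^k) = k" by (rule multiplicity_prime_power[OF pe])
    have mdD: "multiplicity p (d*D) = k + multiplicity p D1"
      unfolding kD using d0 D10 pk0 p mdz mpk
      by (simp add: prime_elem_multiplicity_mult_distrib[OF pe])
    have mdD1: "multiplicity p (d*D1) = multiplicity p D1"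
      using d0 D10 mdz by (simp add: prime_elem_multiplicity_mult_distrib[OF pe])
    show ?thesis
    proof (cases "p dvd D1")
      case False
      have mD1: "multiplicity p D1 = 0" using mult0_iff[OF p D10] False by simp
      have "\<not> p dvd e"
      proof
        assume pe': "p dvd e"
        have "\<not> p dvd a'"
        proof
          assume "p dvd a'" hence "p dvd gcd a' e" using pe' by simp
          hence "p dvd 1" using cae by simp
      thus False using p not_prime_unit by blast
        qed
        moreover have "p dvd a' * (d*D1)^2" unfolding Eq1[symmetric] using pe' by (simp add: power2_eq_square)
        ultimately show False using p pd False by (simp add: prime_dvd_mult_iff prime_dvd_power_iff)
      qed
      hence me: "multiplicity p e = 0" using mult0_iff[OF p] e0 by simp
      have "nonsing_red E p Q \<longleftrightarrow> k = 0"
      proof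
        assume "k = 0" thus "nonsing_red E p Q" using NS2 kD False by simp
      next
        assume "nonsing_red E p Q"
        thus "k = 0" using NS2 kD kN by (cases k) auto
      qed
      thus ?thesis using PU mdD mD1 me by simp
    next
      case True
      hence pN1: "\<not> p dvd N1" using nd by simp
      have "M1 = N1^2 + D1*(a1*N1*d - a2*d^2*D1 - 2*a*D1)" unfolding M1_def
        by (simp add: algebra_simps power2_eq_square)
      moreover have "\<not> p dvd N1^2" using pN1 p by (simp add: prime_dvd_power_iff)
      moreover have "p dvd D1*(a1*N1*d - a2*d^2*D1 - 2*a*D1)" using True by simp
      ultimately have pM1: "\<not> p dvd M1" by (metis dvd_add_left_iff)
      have "multiplicity p e = multiplicity p (d*D1)"
        by (rule val_lemma[OF p pM1 Eq1 cae]) (use e0 d0 D10 in simp_all)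
      hence me: "multiplicity p e = multiplicity p D1" using mdD1 by simp
      have "nonsing_red E p Q \<longleftrightarrow> k = 0"
      proof
        assume "k = 0" thus "nonsing_red E p Q" using NS2 kN pN1 by simp
      next
        assume "nonsing_red E p Q"
        thus "k = 0" using NS2 kD kN True by (cases k) auto
      qed
      thus ?thesis using PU mdD me by simp
    qed
  qed
qed


theorem proposition1p8:
  fixes E :: wcurve and p :: int and P :: qpoint
  assumes "prime p"
    and "elliptic E"
    and "on_curve E P"
    and "P \<noteq> None"
    and "infinite_order E P"
  shows "(nonsing_red E p P \<longleftrightarrow> padic_unit p (u2 E P))
         \<and> CE E P = (LEAST n. n \<ge> 1 \<and> \<bar>u2 E (pmult E n P)\<bar> = 1)"
proof -
  have P2: "pmult E 2 P \<noteq> None" using assms(5) by (simp add: infinite_order_def)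
  have A: "nonsing_red E p P \<longleftrightarrow> padic_unit p (u2 E P)"
    by (rule part1[OF assms(1) assms(3) assms(4) P2])
  have B: "in_E0 E (pmult E n P) \<longleftrightarrow> \<bar>u2 E (pmult E n P)\<bar> = 1" if n: "n \<ge> 1" for n
  proof -
    have c: "on_curve E (pmult E n P)" by (rule pmult_on_curve[OF assms(3)])
    have nn: "pmult E n P \<noteq> None" using assms(5) n by (simp add: infinite_order_def)
    have t: "pmult E 2 (pmult E n P) \<noteq> None" by (rule no_2tors[OF assms(2) assms(3) assms(5) n])
    have "in_E0 E (pmult E n P) \<longleftrightarrow> (\<forall>q::int. prime q \<longrightarrow> padic_unit q (u2 E (pmult E n P)))"
      unfolding in_E0_def using part1[OF _ c nn t] by simp
    thus ?thesis using all_units_iff by simp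
  qed
  have "(\<lambda>n. n \<ge> 1 \<and> in_E0 E (pmult E n P)) = (\<lambda>n. n \<ge> 1 \<and> \<bar>u2 E (pmult E n P)\<bar> = 1)"
    using B by auto
  thus ?thesis using A by (simp add: CE_def)
qed

end
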